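(* Let $Q$ be a Jordan loop and $x\in Q$. Then (i) $(x^2)^{-1}x=x^{-1}$; (ii) $x^3x^{-2}=x$; (iii) $x^3x^{-1}=x^2$; (iv) $x^4(x^{-1})^3=x$; (v) $x^6x^{-2}=x^4$; (vi) $x^6x^{-4}=x^2$.
   Context: A loop is a set $Q$ with a binary operation (juxtaposition) and neutral element $e$ such that for all $a,b$ the equations $ax=b$, $ya=b$ have unique solutions. A Jordan loop is a commutative loop satisfying $x^2(yx)=(x^2y)x$. For $y\in Q$ and $k\ge 0$, $y^k$ denotes the right-associated product $y(y(\cdots(ye)\cdots))$ with $k$ factors $y$. Each $x$ has a unique two-sided inverse $x^{-1}$, and for $k\ge 1$, $x^{-k}$ denotes $(x^{-1})^k$. *)

theory Defs
  imports Main
begin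

definition loop :: "('a \<Rightarrow> 'a \<Rightarrow> 'a) \<Rightarrow> 'a \<Rightarrow> bool" where
  "loop m e \<longleftrightarrow> (\<forall>a. m e a = a \<and> m a e = a) \<and>
     (\<forall>a b. \<exists>!x. m a x = b) \<and> (\<forall>a b. \<exists>!y. m y a = b)"

definition jordan_loop :: "('a \<Rightarrow> 'a \<Rightarrow> 'a) \<Rightarrow> 'a \<Rightarrow> bool" where
  "jordan_loop m e \<longleftrightarrow> loop m e \<and> (\<forall>a b. m a b = m b a) \<and>
     (\<forall>x y. m (m (m x x) y) x = m (m x x) (m y x))"

primrec lpow :: "('a \<Rightarrow> 'a \<Rightarrow> 'a) \<Rightarrow> 'a \<Rightarrow> 'a \<Rightarrow> nat \<Rightarrow> 'a" where
  "lpow m e y 0 = e"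
| "lpow m e y (Suc k) = m y (lpow m e y k)"

definition linv :: "('a \<Rightarrow> 'a \<Rightarrow> 'a) \<Rightarrow> 'a \<Rightarrow> 'a \<Rightarrow> 'a" where
  "linv m e x = (THE y. m x y = e \<and> m y x = e)"

text \<open>x^(-k) = (x^(-1))^k\<close>
definition lnpow :: "('a \<Rightarrow> 'a \<Rightarrow> 'a) \<Rightarrow> 'a \<Rightarrow> 'a \<Rightarrow> nat \<Rightarrow> 'a" where
  "lnpow m e x k = lpow m e (linv m e x) k"

end

theory Submission
  imports Defs
begin

context
  fixes m :: "'a \<Rightarrow> 'a \<Rightarrow> 'a" and i :: "'a \<Rightarrow> 'a" and e
  assumes c: "\<And>a b. m a b = m b a" and l: "\<And>a. m e a = a"
  and J: "\<And>x y. m (m (m x x) y) x = m (m x x) (m y x)"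
  and can: "\<And>a b c. m a b = m a c \<Longrightarrow> b = c"
  and inv: "\<And>a. m a (i a) = e"
begin
lemma p1: "m (i (m x x)) x = i x" by (smt (verit, ccfv_threshold) J c can inv l)
lemma p3: "m (m x (m x x)) (i x) = m x x" by (smt (verit, ccfv_threshold) J c can inv l)
lemma p2: "m (m x (m x x)) (m (i x) (i x)) = x" by (smt (verit) J c can inv l p1)
lemma p4: "m (m x (m x (m x x))) (m (i x) (m (i x) (i x))) = x" by (smt (verit) J c can inv l)
lemma p5: "m (m x (m x (m x (m x (m x x))))) (m (i x) (i x)) = m x (m x (m x x))"
  by (metis J c can inv l p1 p3)
lemma p6: "m (m x (m x (m x (m x (m x x))))) (m (i x) (m (i x) (m (i x) (i x)))) = m x x"
  by (smt (verit, best) J c can inv p3 p5)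
end

theorem lemma2p7:
  fixes m :: "'a \<Rightarrow> 'a \<Rightarrow> 'a" and e :: 'a and x :: 'a
  assumes "jordan_loop m e"
  shows "m (linv m e (lpow m e x 2)) x = linv m e x \<and>
     m (lpow m e x 3) (lnpow m e x 2) = x \<and>
     m (lpow m e x 3) (lnpow m e x 1) = lpow m e x 2 \<and>
     m (lpow m e x 4) (lpow m e (linv m e x) 3) = x \<and>
     m (lpow m e x 6) (lnpow m e x 2) = lpow m e x 4 \<and>
     m (lpow m e x 6) (lnpow m e x 4) = lpow m e x 2"
proof -
  have L: "loop m e" and c: "\<And>a b. m a b = m b a"
    and J: "\<And>x y. m (m (m x x) y) x = m (m x x) (m y x)"
    using assms unfolding jordan_loop_def by auto
  have l: "\<And>a. m e a = a" and r: "\<And>a. m a e = a" using L unfolding loop_def by auto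
  have can: "\<And>a b c. m a b = m a c \<Longrightarrow> b = c"
  proof -
    fix a b c assume h: "m a b = m a c"
    from L have "\<exists>!x. m a x = m a c" unfolding loop_def by blast
    with h show "b = c" by blast
  qed
  have inv: "\<And>a. m a (linv m e a) = e"
  proof -
    fix a
    from L obtain y where y: "m a y = e" unfolding loop_def by blast
    have "m a y = e \<and> m y a = e" using y c by metis
    moreover have "\<And>z. m a z = e \<and> m z a = e \<Longrightarrow> z = y" using y can by metis
    ultimately have "m a (THE z. m a z = e \<and> m z a = e) = e \<and> m (THE z. m a z = e \<and> m z a = e) a = e"
      by (rule theI)
    then show "m a (linv m e a) = e" unfolding linv_def by blast
  qed
  note P = p1[OF c l J can inv] p2[OF c l J can inv] p3[OF c l J can inv]
    p4[OF c l J can inv] p5[OF c l J can inv] p6[OF c l J can inv]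
  show ?thesis
    by (simp add: lnpow_def numeral_eq_Suc r P)
qed

end
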